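(* Let $n\ge5$, let $A\in\mathrm{SGL}_n(\mathbb{F}_2)$ be nonalternate, and let $\mathbf{x}_1,\mathbf{x}_2,\mathbf{x}_3\in\mathbb{F}_2^n$ be linearly independent with $[\mathbf{x}_i^{\top}A^{-1}\mathbf{x}_j]_{i,j=1}^3=\begin{pmatrix}1&1&0\\1&1&0\\0&0&0\end{pmatrix}$. Then there exists $\mathbf{w}\in\mathbb{F}_2^n$ such that either $\mathbf{w}^{\top}A^{-1}\mathbf{w}=1=\mathbf{w}^{\top}A^{-1}\mathbf{x}_1$ and $\mathbf{w}^{\top}A^{-1}\mathbf{x}_2=0=\mathbf{w}^{\top}A^{-1}\mathbf{x}_3$, or $\mathbf{w}^{\top}A^{-1}\mathbf{w}=1=\mathbf{w}^{\top}A^{-1}\mathbf{x}_2$ and $\mathbf{w}^{\top}A^{-1}\mathbf{x}_1=0=\mathbf{w}^{\top}A^{-1}\mathbf{x}_3$.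
   Context: $\mathrm{SGL}_n(\mathbb{F}_2)$ is the set of invertible symmetric $n\times n$ matrices over the binary field $\mathbb{F}_2$. A symmetric matrix over $\mathbb{F}_2$ is alternate if its diagonal is zero; nonalternate otherwise. *)

theory Defs
  imports "HOL-Analysis.Analysis" "HOL-Library.Z2"
begin

definition bform :: "'a::comm_semiring_1^'n^'n \<Rightarrow> 'a^'n \<Rightarrow> 'a^'n \<Rightarrow> 'a" where
  "bform M x y = (\<Sum>i\<in>UNIV. x $ i * (M *v y) $ i)"

definition symmetric_mat :: "'a^'n^'n \<Rightarrow> bool" where
  "symmetric_mat A \<longleftrightarrow> transpose A = A"

definition alternate_mat :: "'a::zero^'n^'n \<Rightarrow> bool" where
  "alternate_mat A \<longleftrightarrow> symmetric_mat A \<and> (\<forall>i. A $ i $ i = 0)"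

end

theory Submission
  imports Defs
begin

definition sdot :: "'a::comm_semiring_1^'n \<Rightarrow> 'a^'n \<Rightarrow> 'a" where
  "sdot x y = (\<Sum>i\<in>UNIV. x $ i * y $ i)"

lemma bit_cases2: "(b::bit) = 0 \<or> b = 1" by (cases b) auto
lemma bit_add_self[simp]: "(b::bit) + b = 0" using bit_cases2[of b] by auto

lemma vsp: "vector_space_pair ((*s) :: 'a::field \<Rightarrow> 'a^'n \<Rightarrow> _) ((*))"
  by (simp add: vector_space_pair_def vec.vector_space_axioms vector_space_over_itself.vector_space_axioms)

lemma vec_expand: "(x::'a::field^'n) = (\<Sum>i\<in>UNIV. x$i *s axis i 1)"
  by (rule basis_expansion[symmetric])

lemma linear_rep:
  fixes g :: "'a::field^'n \<Rightarrow> 'a"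
  assumes "Vector_Spaces.linear (*s) (*) g"
  shows "\<exists>d. \<forall>x. g x = sdot x d"
proof
  show "\<forall>x. g x = sdot x (\<chi> i. g (axis i 1))"
  proof
    fix x :: "'a^'n"
    have "g x = g (\<Sum>i\<in>UNIV. x$i *s axis i 1)" using vec_expand[of x] by simp
    also have "\<dots> = (\<Sum>i\<in>UNIV. g (x$i *s axis i 1))"
      by (rule vector_space_pair.linear_sum[OF vsp assms])
    also have "\<dots> = (\<Sum>i\<in>UNIV. x$i * g (axis i 1))"
      by (rule sum.cong[OF refl], rule vector_space_pair.linear_scale[OF vsp assms])
    finally show "g x = sdot x (\<chi> i. g (axis i 1))" by (simp add: sdot_def)
  qed
qed

lemma sdot_comm: "sdot x y = sdot y x" by (simp add: sdot_def mult.commute)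

lemma solve:
  fixes S :: "('a::field^'n) set"
  assumes "vec.independent S"
  shows "\<exists>w. \<forall>y\<in>S. sdot w y = f y"
proof -
  obtain g where g: "Vector_Spaces.linear (*s) (*) g" "\<forall>x\<in>S. g x = f x"
    using vector_space_pair.linear_independent_extend[OF vsp assms] by blast
  obtain d where "\<forall>x. g x = sdot x d" using linear_rep[OF g(1)] by blast
  then have "\<forall>y\<in>S. sdot d y = f y" using g(2) by (simp add: sdot_comm)
  then show ?thesis by blast
qed


lemma bform_sdot: "bform M x y = sdot x (M *v y)"
  by (simp add: bform_def sdot_def)

lemma sdot_add2: "sdot w (a + b) = sdot w a + sdot w b"
  by (simp add: sdot_def distrib_left sum.distrib)

lemma sdot_scale2: "sdot w (c *s a) = c * sdot w a"
  by (simp add: sdot_def sum_distrib_left mult_ac)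

lemma sdot_add1: "sdot (a + b) w = sdot a w + sdot b w"
  by (simp add: sdot_def distrib_right sum.distrib)

lemma sdot_zero1[simp]: "sdot 0 w = 0"
  by (simp add: sdot_def)

lemma bform_sym:
  assumes "transpose M = M"
  shows "bform M x y = bform M y x"
proof -
  have M: "M $ i $ j = M $ j $ i" for i j
    using assms by (metis transpose_def vec_lambda_beta)
  have "bform M x y = (\<Sum>i\<in>UNIV. \<Sum>j\<in>UNIV. x$i * (M$i$j * y$j))"
    by (simp add: bform_def matrix_vector_mult_def sum_distrib_left)
  also have "\<dots> = (\<Sum>j\<in>UNIV. \<Sum>i\<in>UNIV. x$i * (M$i$j * y$j))"
    by (rule sum.swap)
  also have "\<dots> = (\<Sum>j\<in>UNIV. \<Sum>i\<in>UNIV. y$j * (M$j$i * x$i))"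
    by (simp add: M mult_ac)
  also have "\<dots> = bform M y x"
    by (simp add: bform_def matrix_vector_mult_def sum_distrib_left)
  finally show ?thesis .
qed

lemma q_linear:
  fixes M :: "bit^'n^'n"
  assumes "transpose M = M"
  shows "Vector_Spaces.linear (*s) (*) (\<lambda>w. bform M w w)"
proof -
  have add: "bform M (u+v) (u+v) = bform M u u + bform M v v" for u v
  proof -
    have "bform M (u+v) (u+v) = sdot (u+v) (M *v u + M *v v)"
      by (simp add: bform_sdot matrix_vector_right_distrib)
    also have "\<dots> = sdot u (M *v u) + sdot v (M *v u) + (sdot u (M *v v) + sdot v (M *v v))"
      by (simp only: sdot_add1 sdot_add2)
    also have "\<dots> = bform M u u + bform M v v + (bform M u v + bform M v u)"
      by (simp only: bform_sdot add_ac)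
    also have "bform M u v + bform M v u = 0"
      using bform_sym[OF assms, of u v] by simp
    finally show ?thesis by simp
  qed
  have sc: "bform M (c *s u) (c *s u) = c * bform M u u" for c u
    using bit_cases2[of c] by (auto simp: bform_sdot)
  show ?thesis
    apply (rule Vector_Spaces.linear_iff[THEN iffD2])
    using add sc vec.vector_space_axioms vector_space_over_itself.vector_space_axioms by blast
qed

theorem lemma4p1:
  fixes A :: "bit^'n^'n" and x1 x2 x3 :: "bit^'n"
  assumes "CARD('n) \<ge> 5"
    and "symmetric_mat A" and "invertible A" and "\<not> alternate_mat A"
    and "distinct [x1, x2, x3]" and "vec.independent {x1, x2, x3}"
    and "bform (matrix_inv A) x1 x1 = 1" and "bform (matrix_inv A) x1 x2 = 1"
    and "bform (matrix_inv A) x1 x3 = 0"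
    and "bform (matrix_inv A) x2 x1 = 1" and "bform (matrix_inv A) x2 x2 = 1"
    and "bform (matrix_inv A) x2 x3 = 0"
    and "bform (matrix_inv A) x3 x1 = 0" and "bform (matrix_inv A) x3 x2 = 0"
    and "bform (matrix_inv A) x3 x3 = 0"
  shows "\<exists>w :: bit^'n.
           (bform (matrix_inv A) w w = 1 \<and> bform (matrix_inv A) w x1 = 1 \<and>
            bform (matrix_inv A) w x2 = 0 \<and> bform (matrix_inv A) w x3 = 0) \<or>
           (bform (matrix_inv A) w w = 1 \<and> bform (matrix_inv A) w x2 = 1 \<and>
            bform (matrix_inv A) w x1 = 0 \<and> bform (matrix_inv A) w x3 = 0)"
proof -
  define B where "B = matrix_inv A"
  have AB: "A ** B = mat 1 \<and> B ** A = mat 1"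
    using assms(3) unfolding B_def matrix_inv_def invertible_def by (rule someI_ex)
  have invB: "invertible B" using AB unfolding invertible_def by blast
  have "transpose B ** transpose A = mat 1"
    using AB by (metis matrix_transpose_mul transpose_mat)
  then have BtA: "transpose B ** A = mat 1" using assms(2) by (simp add: symmetric_mat_def)
  have symB: "transpose B = B"
    by (metis AB BtA matrix_mul_assoc matrix_mul_lid matrix_mul_rid)
  obtain d where d: "\<And>w. bform B w w = sdot w d"
    using linear_rep[OF q_linear[OF symB]] by blast
  define y1 where "y1 = B *v x1"
  define y2 where "y2 = B *v x2"
  define y3 where "y3 = B *v x3"
  have injB: "inj ((*v) B)" by (rule inj_matrix_vector_mult[OF invB])
  have dist: "y1 \<noteq> y2" "y1 \<noteq> y3" "y2 \<noteq> y3"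
    using assms(5) injB unfolding y1_def y2_def y3_def inj_def by auto
  have "vec.independent ((*v) B ` {x1, x2, x3})"
    by (rule vec.linear_independent_injective_image[OF matrix_vector_mul_linear_gen assms(6)])
       (use injB in \<open>auto simp: inj_on_def inj_def\<close>)
  then have indY: "vec.independent {y1, y2, y3}" by (simp add: y1_def y2_def y3_def)
  have bw: "\<And>w x. bform B w x = sdot w (B *v x)" by (rule bform_sdot)
  have h11: "sdot x1 d = 1" using assms(7) d unfolding B_def by metis
  have h13: "sdot x1 y3 = 0" using assms(9) bw unfolding B_def y3_def by metis
  show ?thesis
  proof (cases "d \<in> vec.span {y1, y2, y3}")
    case False
    then have ind: "vec.independent (insert d {y1, y2, y3})"
      using indY by (rule vec.independent_insertI)
    have dne: "d \<noteq> y1" "d \<noteq> y2" "d \<noteq> y3"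
      using False vec.span_base[of _ "{y1,y2,y3}"] by auto
    obtain w where w: "\<forall>y\<in>insert d {y1, y2, y3}. sdot w y = (\<lambda>v. if v = d then 1 else if v = y1 then 1 else 0) y"
      using solve[OF ind, of "\<lambda>v. if v = d then 1 else if v = y1 then 1 else 0"] by blast
    then have "sdot w d = 1" "sdot w y1 = 1" "sdot w y2 = 0" "sdot w y3 = 0"
      using dne dist by auto
    then show ?thesis unfolding B_def[symmetric] using d bw y1_def y2_def y3_def by metis
  next
    case True
    then obtain u where u: "d = (\<Sum>v\<in>{y1, y2, y3}. u v *s v)"
      using vec.span_finite[of "{y1,y2,y3}"] by auto
    then have du: "d = u y1 *s y1 + u y2 *s y2 + u y3 *s y3"
      using dist by (simp add: add.assoc)
    have sd: "sdot w d = u y1 * sdot w y1 + u y2 * sdot w y2 + u y3 * sdot w y3" for w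
      unfolding du by (simp add: sdot_add2 sdot_scale2)
    obtain w1 where w1: "\<forall>y\<in>{y1, y2, y3}. sdot w1 y = (\<lambda>v. if v = y1 then 1 else 0) y"
      using solve[OF indY, of "\<lambda>v. if v = y1 then 1 else 0"] by blast
    obtain w2 where w2: "\<forall>y\<in>{y1, y2, y3}. sdot w2 y = (\<lambda>v. if v = y2 then 1 else 0) y"
      using solve[OF indY, of "\<lambda>v. if v = y2 then 1 else 0"] by blast
    have w1v: "sdot w1 y1 = 1" "sdot w1 y2 = 0" "sdot w1 y3 = 0" using w1 dist by auto
    have w2v: "sdot w2 y1 = 0" "sdot w2 y2 = 1" "sdot w2 y3 = 0" using w2 dist by auto
    show ?thesis
    proof (cases "u y1 = 1")
      case True
      then have "sdot w1 d = 1" using sd[of w1] w1v by simp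
      then show ?thesis unfolding B_def[symmetric] using d bw w1v y1_def y2_def y3_def by metis
    next
      case F1: False
      show ?thesis
      proof (cases "u y2 = 1")
        case True
        then have "sdot w2 d = 1" using sd[of w2] w2v by simp
        then show ?thesis unfolding B_def[symmetric] using d bw w2v y1_def y2_def y3_def by metis
      next
        case False
        then have "u y1 = 0" "u y2 = 0" using F1 bit_cases2 by auto
        then have "sdot x1 d = 0" using sd[of x1] h13 by simp
        then show ?thesis using h11 by simp
      qed
    qed
  qed
qed

end
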